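(* Consider the discrete-time control system $x_{k+1}=f(x_k,u_k)$ with the reward $r(x,u)=R-x^TQx$ and the optimal value function $V_\gamma(x)=\sup_{\mathbf u}\sum_{k=0}^\infty\gamma^k r(\Psi(k,x,\mathbf u(k)),\mathbf u(k))$, under the standing assumptions (A1)–(A3) in the context. Then there exist $\alpha_1,\alpha_2\in\mathcal K_\infty$, a constant $\gamma^\star\in(0,1)$ and a constant $c>0$ such that for every $\gamma\in(\gamma^\star,1)$: (i) $\alpha_1(\|x\|)\le \frac{R}{1-\gamma}-V_\gamma(x)\le \alpha_2(\|x\|)$ for all $x\in\mathbb R^n$; and (ii) $V_\gamma(x)-V_\gamma(y)\le -c\|x\|^2$ for all $x\in\mathbb R^n$, where $y=f(x,u^\star_1(x))$ and $u^\star_1(x)$ is the first control input of an optimal control sequence $\mathbf u^\star$ for the initial condition $x$ (i.e. one attaining $V_\gamma(x)$).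
   Context: System: $x_{k+1}=f(x_k,u_k)$ with states $x_k\in\mathbb R^n$ (in the paper, in a compact convex set $D\subset\mathbb R^n$) and inputs $u_k\in\mathcal U\subset\mathbb R^m$; the origin is an equilibrium. For an infinite control sequence $\mathbf u=(u_1,u_2,\dots)$, $\Psi(k,x_0,\mathbf u(k))$ denotes the state at time $k$ starting from $x_0$ (flow map). (A1) $f$ is Lipschitz: $\|f(x,u)-f(y,w)\|\le L_x\|x-y\|+L_u\|u-w\|$. The reward is $r(x,u)=R-x^TQx$ with a constant $R>0$ and a positive definite matrix $Q$. For $\gamma\in(0,1)$ the discounted objective is $\mathbf J^{\mathbf u}_\gamma(x_0)=\sum_{k=0}^\infty \gamma^k r(\Psi(k,x_0,\mathbf u(k)),\mathbf u(k))$ and $V_\gamma(x_0)=\sup_{\mathbf u}\mathbf J^{\mathbf u}_\gamma(x_0)$. (A2) For every initial condition $x_0\in\mathbb R^n$ there exists a control sequence $\mathbf u^\star$ with $V_\gamma(x_0)=\mathbf J^{\mathbf u^\star}_\gamma(x_0)$. (A3) There is a constant $a_V$ such that $\frac{R}{1-\gamma}-V_\gamma(x)\le a_V\|x\|^2$ for all $\gamma\in(0,1)$ and $x\in\mathbb R^n$. A function $\alpha:\mathbb R_{\ge0}\to\mathbb R_{\ge0}$ is of class $\mathcal K_\infty$ if it is continuous, zero at zero, strictly increasing and unbounded. *)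

theory Defs
  imports "HOL-Analysis.Analysis"
begin

text \<open>Flow map: state at time k from initial state x0 under control sequence u
  (u 0 is the first control input, called u_1 in the paper).\<close>
fun flow :: "('s \<Rightarrow> 'c \<Rightarrow> 's) \<Rightarrow> nat \<Rightarrow> 's \<Rightarrow> (nat \<Rightarrow> 'c) \<Rightarrow> 's" where
  "flow f 0 x0 u = x0"
| "flow f (Suc k) x0 u = f (flow f k x0 u) (u k)"

definition reward :: "real \<Rightarrow> real^'n^'n \<Rightarrow> real^'n \<Rightarrow> real^'m \<Rightarrow> real" where
  "reward R Q x w = R - x \<bullet> (Q *v x)"

definition disc_term ::
  "(real^'n \<Rightarrow> real^'m \<Rightarrow> real^'n) \<Rightarrow> real \<Rightarrow> real^'n^'n \<Rightarrow> real \<Rightarrow> real^'n \<Rightarrow> (nat \<Rightarrow> real^'m) \<Rightarrow> nat \<Rightarrow> real" where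
  "disc_term f R Q \<gamma> x0 u k = \<gamma> ^ k * reward R Q (flow f k x0 u) (u k)"

definition J_obj ::
  "(real^'n \<Rightarrow> real^'m \<Rightarrow> real^'n) \<Rightarrow> real \<Rightarrow> real^'n^'n \<Rightarrow> real \<Rightarrow> real^'n \<Rightarrow> (nat \<Rightarrow> real^'m) \<Rightarrow> real" where
  "J_obj f R Q \<gamma> x0 u = (\<Sum>k. disc_term f R Q \<gamma> x0 u k)"

text \<open>Admissible control sequences: values in U and a convergent objective series
  (the terms are bounded above by gamma^k R, so a divergent series has value -infinity
  and does not contribute to the supremum).\<close>
definition admissible ::
  "(real^'n \<Rightarrow> real^'m \<Rightarrow> real^'n) \<Rightarrow> (real^'m) set \<Rightarrow> real \<Rightarrow> real^'n^'n \<Rightarrow> real \<Rightarrow> real^'n \<Rightarrow> (nat \<Rightarrow> real^'m) \<Rightarrow> bool" where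
  "admissible f U R Q \<gamma> x0 u \<longleftrightarrow> (\<forall>k. u k \<in> U) \<and> summable (disc_term f R Q \<gamma> x0 u)"

definition V_opt ::
  "(real^'n \<Rightarrow> real^'m \<Rightarrow> real^'n) \<Rightarrow> (real^'m) set \<Rightarrow> real \<Rightarrow> real^'n^'n \<Rightarrow> real \<Rightarrow> real^'n \<Rightarrow> real" where
  "V_opt f U R Q \<gamma> x0 = Sup {J_obj f R Q \<gamma> x0 u | u. admissible f U R Q \<gamma> x0 u}"

definition optimal_seq ::
  "(real^'n \<Rightarrow> real^'m \<Rightarrow> real^'n) \<Rightarrow> (real^'m) set \<Rightarrow> real \<Rightarrow> real^'n^'n \<Rightarrow> real \<Rightarrow> real^'n \<Rightarrow> (nat \<Rightarrow> real^'m) \<Rightarrow> bool" where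
  "optimal_seq f U R Q \<gamma> x0 u \<longleftrightarrow>
     admissible f U R Q \<gamma> x0 u \<and> J_obj f R Q \<gamma> x0 u = V_opt f U R Q \<gamma> x0"

definition class_Kinf :: "(real \<Rightarrow> real) \<Rightarrow> bool" where
  "class_Kinf \<alpha> \<longleftrightarrow> continuous_on {0..} \<alpha> \<and> \<alpha> 0 = 0 \<and> strict_mono_on {0..} \<alpha>
      \<and> (\<forall>t\<ge>0. \<alpha> t \<ge> 0) \<and> filterlim \<alpha> at_top at_top"

end

theory Submission
  imports Defs
begin

lemma flow_shift:
  "flow f (Suc k) x u = flow f k (f x (u 0)) (\<lambda>k. u (Suc k))"
  by (induction k) auto

lemma disc_shift:
  "disc_term f R Q \<gamma> x u (Suc k) = \<gamma> * disc_term f R Q \<gamma> (f x (u 0)) (\<lambda>k. u (Suc k)) k"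
  unfolding disc_term_def flow_shift by simp

lemma J_split:
  assumes adm: "admissible f U R Q \<gamma> x u" and g: "\<gamma> \<noteq> 0"
  shows "admissible f U R Q \<gamma> (f x (u 0)) (\<lambda>k. u (Suc k))"
    and "J_obj f R Q \<gamma> x u = reward R Q x (u 0) + \<gamma> * J_obj f R Q \<gamma> (f x (u 0)) (\<lambda>k. u (Suc k))"
proof -
  have s: "summable (disc_term f R Q \<gamma> x u)" using adm unfolding admissible_def by blast
  hence "summable (\<lambda>k. disc_term f R Q \<gamma> x u (Suc k))" using summable_Suc_iff by blast
  hence "summable (\<lambda>k. \<gamma> * disc_term f R Q \<gamma> (f x (u 0)) (\<lambda>k. u (Suc k)) k)"
    unfolding disc_shift .
  hence s2: "summable (disc_term f R Q \<gamma> (f x (u 0)) (\<lambda>k. u (Suc k)))"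
    using summable_cmult_iff g by blast
  show "admissible f U R Q \<gamma> (f x (u 0)) (\<lambda>k. u (Suc k))"
    using adm s2 unfolding admissible_def by auto
  have "(\<Sum>k. disc_term f R Q \<gamma> x u (Suc k)) = J_obj f R Q \<gamma> x u - disc_term f R Q \<gamma> x u 0"
    unfolding J_obj_def using suminf_split_head[OF s] by simp
  moreover have "(\<Sum>k. disc_term f R Q \<gamma> x u (Suc k)) = \<gamma> * J_obj f R Q \<gamma> (f x (u 0)) (\<lambda>k. u (Suc k))"
    unfolding disc_shift J_obj_def using suminf_mult[OF s2] by simp
  ultimately show "J_obj f R Q \<gamma> x u = reward R Q x (u 0) + \<gamma> * J_obj f R Q \<gamma> (f x (u 0)) (\<lambda>k. u (Suc k))"
    unfolding disc_term_def by simp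
qed

lemma J_bound:
  fixes Q :: "real^'n^'n"
  assumes adm: "admissible f U R Q \<gamma> x u" and g: "0 < \<gamma>" "\<gamma> < 1"
    and psd: "\<forall>x. x \<bullet> (Q *v x) \<ge> 0"
  shows "J_obj f R Q \<gamma> x u \<le> R / (1 - \<gamma>)"
proof -
  have s: "summable (disc_term f R Q \<gamma> x u)" using adm unfolding admissible_def by blast
  have "(\<lambda>k. \<gamma> ^ k * R) sums (1 / (1 - \<gamma>) * R)"
    using sums_mult2[OF geometric_sums[of \<gamma>], of R] g by simp
  hence gs: "(\<lambda>k. \<gamma> ^ k * R) sums (R / (1 - \<gamma>))" by simp
  have "disc_term f R Q \<gamma> x u k \<le> \<gamma> ^ k * R" for k
    unfolding disc_term_def reward_def
    by (intro mult_left_mono) (use psd g in auto)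
  hence "J_obj f R Q \<gamma> x u \<le> (\<Sum>k. \<gamma> ^ k * R)"
    unfolding J_obj_def by (rule suminf_le[OF _ s sums_summable[OF gs]])
  thus ?thesis using sums_unique[OF gs] by simp
qed

lemma V_facts:
  fixes Q :: "real^'n^'n"
  assumes g: "0 < \<gamma>" "\<gamma> < 1" and psd: "\<forall>x. x \<bullet> (Q *v x) \<ge> 0"
  shows "admissible f U R Q \<gamma> x u \<Longrightarrow> J_obj f R Q \<gamma> x u \<le> V_opt f U R Q \<gamma> x"
proof -
  assume a: "admissible f U R Q \<gamma> x u"
  have "bdd_above {J_obj f R Q \<gamma> x u | u. admissible f U R Q \<gamma> x u}"
    using J_bound[OF _ g psd] by (auto intro!: bdd_aboveI[where M="R/(1-\<gamma>)"])
  thus ?thesis unfolding V_opt_def using a by (auto intro!: cSup_upper)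
qed

lemma Kinf_quad:
  assumes "c > 0"
  shows "class_Kinf (\<lambda>t. c * t ^ 2)"
proof -
  have "filterlim (\<lambda>t::real. c * t ^ 2) at_top at_top"
    by (rule filterlim_tendsto_pos_mult_at_top[OF tendsto_const assms])
       (rule filterlim_pow_at_top[OF _ filterlim_ident], simp)
  moreover have "strict_mono_on {0..} (\<lambda>t::real. c * t ^ 2)"
    using assms by (auto simp: strict_mono_on_def power_strict_mono)
  moreover have "continuous_on {0..} (\<lambda>t::real. c * t ^ 2)"
    by (intro continuous_intros)
  ultimately show ?thesis unfolding class_Kinf_def using assms by auto
qed

lemma quad_lower:
  fixes Q :: "real^'n^'n"
  assumes Q_pd: "\<forall>x. x \<noteq> 0 \<longrightarrow> x \<bullet> (Q *v x) > 0"
  shows "\<exists>l>0. \<forall>x. l * norm x ^ 2 \<le> x \<bullet> (Q *v x)"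
proof -
  have cont: "continuous_on (sphere 0 1) (\<lambda>x::real^'n. x \<bullet> (Q *v x))"
    by (intro continuous_intros linear_continuous_on bounded_linear_intros)
  have ne: "sphere (0::real^'n) 1 \<noteq> {}"
  proof -
    have "(axis undefined 1 :: real^'n) \<in> sphere 0 1" by simp
    thus ?thesis by blast
  qed
  obtain z where z: "z \<in> sphere 0 1" and zmin: "\<And>y. y \<in> sphere 0 1 \<Longrightarrow> z \<bullet> (Q *v z) \<le> y \<bullet> (Q *v y)"
    using continuous_attains_inf[OF compact_sphere ne cont] by blast
  have "z \<noteq> 0" using z by auto
  hence l: "z \<bullet> (Q *v z) > 0" using Q_pd by auto
  have "\<forall>x. z \<bullet> (Q *v z) * norm x ^ 2 \<le> x \<bullet> (Q *v x)"
  proof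
    fix x :: "real^'n"
    show "z \<bullet> (Q *v z) * norm x ^ 2 \<le> x \<bullet> (Q *v x)"
    proof (cases "x = 0")
      case True thus ?thesis by simp
    next
      case False
      let ?y = "x /\<^sub>R norm x"
      have "?y \<in> sphere 0 1" using False by simp
      hence "z \<bullet> (Q *v z) \<le> ?y \<bullet> (Q *v ?y)" by (rule zmin)
      also have "?y \<bullet> (Q *v ?y) = (x \<bullet> (Q *v x)) / norm x ^ 2"
        by (simp add: matrix_vector_mult_scaleR power2_eq_square divide_inverse mult.commute)
      finally show ?thesis using False by (simp add: field_simps)
    qed
  qed
  thus ?thesis using l by blast
qed

theorem proposition1:
  fixes f :: "real^'n \<Rightarrow> real^'m \<Rightarrow> real^'n"
    and U :: "(real^'m) set"
    and R :: real
    and Q :: "real^'n^'n"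
  assumes equil: "\<exists>ue\<in>U. f 0 ue = 0"
    and A1: "\<exists>Lx Lu. \<forall>x y u w. u \<in> U \<longrightarrow> w \<in> U \<longrightarrow>
               norm (f x u - f y w) \<le> Lx * norm (x - y) + Lu * norm (u - w)"
    and R_pos: "R > 0"
    and Q_pd: "\<forall>x. x \<noteq> 0 \<longrightarrow> x \<bullet> (Q *v x) > 0"
    and A2: "\<forall>\<gamma> x0. 0 < \<gamma> \<and> \<gamma> < 1 \<longrightarrow> (\<exists>u. optimal_seq f U R Q \<gamma> x0 u)"
    and A3: "\<exists>aV. \<forall>\<gamma> x. 0 < \<gamma> \<and> \<gamma> < 1 \<longrightarrow>
               R / (1 - \<gamma>) - V_opt f U R Q \<gamma> x \<le> aV * norm x ^ 2"
  shows "\<exists>\<alpha>1 \<alpha>2 \<gamma>s c. class_Kinf \<alpha>1 \<and> class_Kinf \<alpha>2 \<and> 0 < \<gamma>s \<and> \<gamma>s < 1 \<and> c > 0 \<and>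
           (\<forall>\<gamma>. \<gamma>s < \<gamma> \<and> \<gamma> < 1 \<longrightarrow>
              (\<forall>x. \<alpha>1 (norm x) \<le> R / (1 - \<gamma>) - V_opt f U R Q \<gamma> x \<and>
                   R / (1 - \<gamma>) - V_opt f U R Q \<gamma> x \<le> \<alpha>2 (norm x)) \<and>
              (\<forall>x u. optimal_seq f U R Q \<gamma> x u \<longrightarrow>
                   V_opt f U R Q \<gamma> x - V_opt f U R Q \<gamma> (f x (u 0)) \<le> - c * norm x ^ 2))"
proof -
  have psd: "\<forall>x. x \<bullet> (Q *v x) \<ge> 0"
  proof
    fix x :: "real^'n"
    show "x \<bullet> (Q *v x) \<ge> 0" using Q_pd by (cases "x = 0") (auto intro: less_imp_le)
  qed
  obtain l where l: "l > 0" "\<And>x. l * norm x ^ 2 \<le> x \<bullet> (Q *v x)"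
    using quad_lower[OF Q_pd] by blast
  obtain aV where aV: "\<And>\<gamma> x. 0 < \<gamma> \<Longrightarrow> \<gamma> < 1 \<Longrightarrow>
      R / (1 - \<gamma>) - V_opt f U R Q \<gamma> x \<le> aV * norm x ^ 2" using A3 by blast
  define a where "a = max aV 1"
  have a1: "a \<ge> 1" unfolding a_def by simp
  have aV': "R / (1 - \<gamma>) - V_opt f U R Q \<gamma> x \<le> a * norm x ^ 2" if "0 < \<gamma>" "\<gamma> < 1" for \<gamma> x
  proof -
    have "aV * norm x ^ 2 \<le> a * norm x ^ 2" unfolding a_def by (intro mult_right_mono) auto
    thus ?thesis using aV[OF that, of x] by linarith
  qed
  define gs where "gs = 2 * a / (l + 2 * a)"
  have gs0: "0 < gs" "gs < 1" unfolding gs_def using a1 l by (auto simp: field_simps)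
  have main: "(\<forall>x. l * norm x ^ 2 \<le> R / (1 - \<gamma>) - V_opt f U R Q \<gamma> x \<and>
                   R / (1 - \<gamma>) - V_opt f U R Q \<gamma> x \<le> a * norm x ^ 2) \<and>
              (\<forall>x u. optimal_seq f U R Q \<gamma> x u \<longrightarrow>
                   V_opt f U R Q \<gamma> x - V_opt f U R Q \<gamma> (f x (u 0)) \<le> - (l/2) * norm x ^ 2)"
    if g: "gs < \<gamma>" "\<gamma> < 1" for \<gamma>
  proof -
    have g0: "0 < \<gamma>" using g gs0 by simp
    let ?V = "V_opt f U R Q \<gamma>"
    have step: "?V x \<le> reward R Q x (u 0) + \<gamma> * ?V (f x (u 0))"
      if opt: "optimal_seq f U R Q \<gamma> x u" for x u
    proof -
      have adm: "admissible f U R Q \<gamma> x u" and eq: "J_obj f R Q \<gamma> x u = ?V x"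
        using opt unfolding optimal_seq_def by auto
      have "J_obj f R Q \<gamma> (f x (u 0)) (\<lambda>k. u (Suc k)) \<le> ?V (f x (u 0))"
        using V_facts[OF g0 g(2) psd J_split(1)[OF adm]] g0 by simp
      hence "\<gamma> * J_obj f R Q \<gamma> (f x (u 0)) (\<lambda>k. u (Suc k)) \<le> \<gamma> * ?V (f x (u 0))"
        using g0 by (simp add: mult_left_mono)
      thus ?thesis using J_split(2)[OF adm] g0 eq by simp
    qed
    have lower: "l * norm x ^ 2 \<le> R / (1 - \<gamma>) - ?V x" for x
    proof -
      obtain u where opt: "optimal_seq f U R Q \<gamma> x u" using A2 g0 g(2) by blast
      have adm: "admissible f U R Q \<gamma> x u"
        using opt unfolding optimal_seq_def by auto
      have "?V (f x (u 0)) \<le> R / (1 - \<gamma>)"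
      proof -
        obtain v where "optimal_seq f U R Q \<gamma> (f x (u 0)) v" using A2 g0 g(2) by blast
        thus ?thesis using J_bound[OF _ g0 g(2) psd] unfolding optimal_seq_def by metis
      qed
      hence "\<gamma> * ?V (f x (u 0)) \<le> \<gamma> * (R / (1 - \<gamma>))"
        using g0 by (intro mult_left_mono) auto
      hence "?V x \<le> R - x \<bullet> (Q *v x) + \<gamma> * (R / (1 - \<gamma>))"
        using step[OF opt] unfolding reward_def by linarith
      also have "\<dots> = R / (1 - \<gamma>) - x \<bullet> (Q *v x)" using g by (simp add: field_simps)
      finally show ?thesis using l(2)[of x] by linarith
    qed
    have dec: "?V x - ?V (f x (u 0)) \<le> - (l/2) * norm x ^ 2"
      if opt: "optimal_seq f U R Q \<gamma> x u" for x u
    proof -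
      let ?y = "f x (u 0)"
      let ?W = "\<lambda>z. R / (1 - \<gamma>) - ?V z"
      have s: "?V x \<le> R - x \<bullet> (Q *v x) + \<gamma> * ?V ?y" using step[OF opt] unfolding reward_def .
      have "R / (1 - \<gamma>) = R + \<gamma> * (R / (1 - \<gamma>))" using g by (simp add: field_simps)
      moreover have "\<gamma> * ?W ?y = \<gamma> * (R / (1 - \<gamma>)) - \<gamma> * ?V ?y" by (simp add: right_diff_distrib)
      ultimately have wx: "?W x \<ge> x \<bullet> (Q *v x) + \<gamma> * ?W ?y" using s by linarith
      have "\<gamma> * ?W ?y \<le> a * norm x ^ 2"
        using wx aV'[OF g0 g(2), of x] psd[rule_format, of x] by linarith
      hence wy: "?W ?y \<le> a * norm x ^ 2 / \<gamma>" using g0 by (simp add: field_simps)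
      have "?V x - ?V ?y = - x \<bullet> (Q *v x) + (1 - \<gamma>) * ?W ?y + (?V x - (R - x \<bullet> (Q *v x) + \<gamma> * ?V ?y))"
        using g by (simp add: field_simps)
      also have "\<dots> \<le> - x \<bullet> (Q *v x) + (1 - \<gamma>) * ?W ?y" using s by simp
      also have "\<dots> \<le> - (l * norm x ^ 2) + (1 - \<gamma>) * (a * norm x ^ 2 / \<gamma>)"
        using l(2)[of x] mult_left_mono[OF wy, of "1 - \<gamma>"] g by simp
      also have "\<dots> \<le> - (l/2) * norm x ^ 2"
      proof -
        have "(1 - \<gamma>) * a / \<gamma> \<le> l / 2"
        proof -
          have "2 * a < \<gamma> * (l + 2 * a)" using g(1) unfolding gs_def using a1 l
            by (simp add: field_simps)
          thus ?thesis using g0 by (simp add: field_simps)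
        qed
        hence "(1 - \<gamma>) * a / \<gamma> * norm x ^ 2 \<le> l / 2 * norm x ^ 2"
          by (intro mult_right_mono) auto
        thus ?thesis by (simp add: field_simps)
      qed
      finally show ?thesis .
    qed
    show ?thesis using lower aV'[OF g0 g(2)] dec by blast
  qed
  show ?thesis
    apply (rule exI[of _ "\<lambda>t. l * t ^ 2"], rule exI[of _ "\<lambda>t. a * t ^ 2"],
           rule exI[of _ gs], rule exI[of _ "l/2"])
    using Kinf_quad[OF l(1)] Kinf_quad[of a] a1 gs0 l(1) main by auto
qed

end
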